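(* Let $\mathcal{H}$ be a real Hilbert space and let $C\subset\mathcal{H}$ be a nonempty, closed and convex set with $0\in C$. Then a function $f\in\Gamma_0(\mathcal{H})$ satisfies $$\Vert \operatorname{prox}_f(x)\Vert = d_C(x)\quad\text{for all } x\in\mathcal{H}$$ if and only if $f=\sigma_C+c$ for some constant $c\in\mathbb{R}$.
   Context: $\Gamma_0(\mathcal{H})$ denotes the set of proper, convex, lower semicontinuous functions $\mathcal{H}\to\mathbb{R}\cup\{+\infty\}$. $\operatorname{prox}_f(x)=\operatorname{argmin}_{y\in\mathcal{H}}\{f(y)+\tfrac12\Vert x-y\Vert^2\}$. $d_C(x)=\inf_{c\in C}\Vert x-c\Vert$ is the distance function to $C$, and $\sigma_C(x)=\sup_{y\in C}\langle y,x\rangle$ is the support function of $C$. *)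

theory Defs
  imports "HOL-Analysis.Analysis" "HOL-Library.Extended_Real"
begin

text \<open>Extended-real-valued functions H -> R union {+infinity}; a value -infinity is excluded by properness.\<close>

definition proper_fun :: "('a \<Rightarrow> ereal) \<Rightarrow> bool" where
  "proper_fun f \<longleftrightarrow> (\<forall>x. f x \<noteq> -\<infinity>) \<and> (\<exists>x. f x \<noteq> \<infinity>)"

definition convex_fun :: "('a::real_vector \<Rightarrow> ereal) \<Rightarrow> bool" where
  "convex_fun f \<longleftrightarrow> (\<forall>x y. \<forall>u::real. 0 \<le> u \<and> u \<le> 1 \<longrightarrow>
      f ((1 - u) *\<^sub>R x + u *\<^sub>R y) \<le> ereal (1 - u) * f x + ereal u * f y)"

definition lsc_fun :: "('a::topological_space \<Rightarrow> ereal) \<Rightarrow> bool" where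
  "lsc_fun f \<longleftrightarrow> (\<forall>t::ereal. closed {x. f x \<le> t})"

definition Gamma0 :: "('a::real_normed_vector \<Rightarrow> ereal) set" where
  "Gamma0 = {f. proper_fun f \<and> convex_fun f \<and> lsc_fun f}"

text \<open>prox_f(x): the (for f in Gamma0, unique) minimiser of f(y) + 1/2 ||x - y||^2.\<close>
definition prox :: "('a::real_inner \<Rightarrow> ereal) \<Rightarrow> 'a \<Rightarrow> 'a" where
  "prox f x = (THE p. \<forall>y. f p + ereal ((norm (x - p))\<^sup>2 / 2) \<le> f y + ereal ((norm (x - y))\<^sup>2 / 2))"

definition support_fun :: "'a::real_inner set \<Rightarrow> 'a \<Rightarrow> ereal" where
  "support_fun C x = (SUP y\<in>C. ereal (inner y x))"

end

theory Submission
  imports Defs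
begin

definition ismin :: "('a::real_inner \<Rightarrow> ereal) \<Rightarrow> 'a \<Rightarrow> 'a \<Rightarrow> bool" where
  "ismin f x p \<longleftrightarrow> (\<forall>y. f p + ereal ((norm (x - p))\<^sup>2 / 2) \<le> f y + ereal ((norm (x - y))\<^sup>2 / 2))"

lemma prox_eq: "prox f x = (THE p. ismin f x p)"
  unfolding prox_def ismin_def by simp

lemma norm_diff_sq: fixes a b :: "'a::real_inner"
  shows "(norm (a - t *\<^sub>R b))\<^sup>2 = (norm a)\<^sup>2 - 2 * t * inner a b + t\<^sup>2 * (norm b)\<^sup>2"
  by (simp only: power2_norm_eq_inner) (simp add: inner_diff_left inner_diff_right inner_commute algebra_simps power2_eq_square)

lemma norm_diff_sq2: fixes a b :: "'a::real_inner"
  shows "(norm (a - b))\<^sup>2 = (norm a)\<^sup>2 - 2 * inner a b + (norm b)\<^sup>2"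
  using norm_diff_sq[of a 1 b] by simp

lemma fin_val: "proper_fun f \<Longrightarrow> f w \<noteq> \<infinity> \<Longrightarrow> \<exists>b. f w = ereal b"
  by (cases "f w") (auto simp: proper_fun_def)

lemma prox_sub:
  fixes f :: "'a::real_inner \<Rightarrow> ereal"
  assumes pr: "proper_fun f" and cv: "convex_fun f" and m: "ismin f x p"
  shows "\<exists>a. f p = ereal a \<and> (\<forall>w. ereal (a + inner (x - p) (w - p)) \<le> f w)"
proof -
  obtain w0 where w0: "f w0 \<noteq> \<infinity>" using pr unfolding proper_fun_def by auto
  have "f p + ereal ((norm (x - p))\<^sup>2 / 2) \<le> f w0 + ereal ((norm (x - w0))\<^sup>2 / 2)"
    using m unfolding ismin_def by auto
  then have "f p \<noteq> \<infinity>" using w0 by auto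
  then obtain a where a: "f p = ereal a" using fin_val[OF pr] by blast
  have "ereal (a + inner (x - p) (w - p)) \<le> f w" for w
  proof (cases "f w = \<infinity>")
    case True then show ?thesis by simp
  next
    case False
    then obtain b where b: "f w = ereal b" using fin_val[OF pr] by blast
    define k where "k = inner (x - p) (w - p)"
    define D where "D = (norm (w - p))\<^sup>2 / 2"
    have D0: "D \<ge> 0" unfolding D_def by simp
    have key: "a + k \<le> b + t * D" if t: "0 < t" "t \<le> 1" for t
    proof -
      define wt where "wt = (1 - t) *\<^sub>R p + t *\<^sub>R w"
      have "f wt \<le> ereal (1 - t) * f p + ereal t * f w"
        using cv t unfolding convex_fun_def wt_def by auto
      also have "\<dots> = ereal ((1 - t) * a + t * b)" using a b by simp
      finally have fwt: "f wt \<le> ereal ((1 - t) * a + t * b)" .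
      have "f p + ereal ((norm (x - p))\<^sup>2 / 2) \<le> f wt + ereal ((norm (x - wt))\<^sup>2 / 2)"
        using m unfolding ismin_def by auto
      also have "\<dots> \<le> ereal ((1 - t) * a + t * b) + ereal ((norm (x - wt))\<^sup>2 / 2)"
        using fwt by (rule add_right_mono)
      finally have "a + (norm (x - p))\<^sup>2 / 2 \<le> (1 - t) * a + t * b + (norm (x - wt))\<^sup>2 / 2"
        using a by simp
      moreover have "x - wt = (x - p) - t *\<^sub>R (w - p)" unfolding wt_def by (simp add: algebra_simps)
      moreover have "(norm ((x - p) - t *\<^sub>R (w - p)))\<^sup>2 = (norm (x - p))\<^sup>2 - 2 * t * k + t\<^sup>2 * (norm (w - p))\<^sup>2"
        unfolding k_def by (rule norm_diff_sq)
      ultimately have "t * a \<le> t * b - t * k + t * (t * D)"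
        unfolding D_def by (simp add: algebra_simps power2_eq_square)
      then have "t * (a + k) \<le> t * (b + t * D)" by (simp add: algebra_simps)
      then show "a + k \<le> b + t * D" using t by simp
    qed
    have "a + k \<le> b"
    proof (rule ccontr)
      assume "\<not> a + k \<le> b"
      then have e: "a + k - b > 0" by simp
      define t where "t = min 1 ((a + k - b) / (D + 1))"
      have t0: "0 < t" "t \<le> 1" unfolding t_def using e D0 by auto
      have "t * D \<le> (a + k - b) / (D + 1) * D" unfolding t_def using D0 e
        by (intro mult_right_mono) auto
      also have "\<dots> < a + k - b" using e D0 by (simp add: field_simps)
      finally show False using key[OF t0] by simp
    qed
    then show ?thesis using b unfolding k_def by simp
  qed
  then show ?thesis using a by blast
qed


lemma prox_unique:
  fixes f :: "'a::real_inner \<Rightarrow> ereal"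
  assumes pr: "proper_fun f" and cv: "convex_fun f" and m: "ismin f x p" and m2: "ismin f x q"
  shows "q = p"
proof -
  obtain a where a: "f p = ereal a" and sub: "\<And>w. ereal (a + inner (x - p) (w - p)) \<le> f w"
    using prox_sub[OF pr cv m] by blast
  obtain b where b: "f q = ereal b" and sub2: "\<And>w. ereal (b + inner (x - q) (w - q)) \<le> f w"
    using prox_sub[OF pr cv m2] by blast
  have "a + inner (x - p) (q - p) \<le> b" using sub[of q] b by simp
  moreover have "b + inner (x - q) (p - q) \<le> a" using sub2[of p] a by simp
  ultimately have "inner (x - p) (q - p) + inner (x - q) (p - q) \<le> 0" by simp
  moreover have "inner (x - p) (q - p) + inner (x - q) (p - q) = inner (q - p) (q - p)"
    by (simp add: inner_diff_left inner_diff_right inner_commute algebra_simps)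
  ultimately have "inner (q - p) (q - p) \<le> 0" by simp
  then have "q - p = 0" by (metis inner_ge_zero inner_eq_zero_iff order_antisym)
  then show ?thesis by simp
qed

lemma lsc_ball:
  fixes f :: "'a::real_normed_vector \<Rightarrow> ereal"
  assumes "lsc_fun f" "f w0 = ereal a"
  shows "\<exists>d>0. \<forall>w. dist w w0 < d \<longrightarrow> f w > ereal (a - 1)"
proof -
  have "closed {x. f x \<le> ereal (a - 1)}" using assms(1) unfolding lsc_fun_def by blast
  then have o: "open {x. \<not> f x \<le> ereal (a - 1)}"
    by (simp add: open_closed Collect_neg_eq)
  have "w0 \<in> {x. \<not> f x \<le> ereal (a - 1)}" using assms(2) by simp
  then obtain d where "d > 0" "ball w0 d \<subseteq> {x. \<not> f x \<le> ereal (a - 1)}"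
    using o unfolding open_contains_ball by blast
  then show ?thesis by (auto simp: dist_commute subset_iff not_le)
qed

lemma lin_lower:
  fixes f :: "'a::real_normed_vector \<Rightarrow> ereal"
  assumes pr: "proper_fun f" and cv: "convex_fun f" and a: "f w0 = ereal a" and d: "d > 0"
    and near: "\<forall>w. dist w w0 < d \<longrightarrow> f w > ereal (a - 1)"
  shows "f w \<ge> ereal (a - 1 - 2 / d * norm (w - w0))"
proof (cases "dist w w0 < d")
  case True
  then have "f w > ereal (a - 1)" using near by blast
  moreover have "a - 1 - 2 / d * norm (w - w0) \<le> a - 1" using d by simp
  ultimately show ?thesis by (meson ereal_less_eq(3) less_imp_le order_trans)
next
  case False
  define n where "n = norm (w - w0)"
  have nd: "n \<ge> d" using False unfolding n_def by (simp add: dist_norm)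
  define t where "t = d / (2 * n)"
  have t: "0 < t" "t \<le> 1" unfolding t_def using nd d by (auto simp: field_simps)
  define u where "u = (1 - t) *\<^sub>R w0 + t *\<^sub>R w"
  have "u - w0 = t *\<^sub>R (w - w0)" unfolding u_def by (simp add: algebra_simps)
  then have "dist u w0 = t * n" unfolding n_def using t by (simp add: dist_norm)
  also have "\<dots> = d / 2" unfolding t_def using nd d by (simp add: field_simps)
  finally have "f u > ereal (a - 1)" using near d by simp
  moreover have "f u \<le> ereal (1 - t) * f w0 + ereal t * f w"
    using cv t unfolding convex_fun_def u_def by auto
  ultimately have lt: "ereal (a - 1) < ereal (1 - t) * ereal a + ereal t * f w" using a by simp
  show ?thesis
  proof (cases "f w = \<infinity>")
    case True then show ?thesis by simp
  next
    case False
    then obtain b where b: "f w = ereal b" using fin_val[OF pr] by blast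
    have "a - 1 < (1 - t) * a + t * b" using lt b by simp
    then have "t * (a - 1 / t) < t * b" using t by (simp add: algebra_simps)
    then have "a - 1 / t < b" using t by simp
    moreover have "1 / t = 2 / d * n" unfolding t_def using nd d by (simp add: field_simps)
    ultimately have "a - 1 - 2 / d * n \<le> b" by simp
    then show ?thesis using b n_def by simp
  qed
qed


lemma par_id: fixes u v :: "'a::real_inner"
  shows "(norm ((1/2) *\<^sub>R (u + v)))\<^sup>2 = (norm u)\<^sup>2 / 2 + (norm v)\<^sup>2 / 2 - (norm (v - u))\<^sup>2 / 4"
  apply (simp only: power2_norm_eq_inner)
  apply (simp add: inner_diff_left inner_diff_right inner_add_left inner_add_right inner_commute algebra_simps)
  apply (simp add: field_simps)
  done

lemma mid_bound:
  fixes f :: "'a::real_inner \<Rightarrow> ereal"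
  assumes pr: "proper_fun f" and cv: "convex_fun f"
    and lb: "\<forall>w. ereal \<mu> \<le> f w + ereal ((norm (x - w))\<^sup>2 / 2)"
    and A: "f a + ereal ((norm (x - a))\<^sup>2 / 2) = ereal A"
    and B: "f b + ereal ((norm (x - b))\<^sup>2 / 2) = ereal B"
  shows "(norm (a - b))\<^sup>2 \<le> 4 * (A - \<mu>) + 4 * (B - \<mu>)"
proof -
  have fa: "f a = ereal (A - (norm (x - a))\<^sup>2 / 2)" using A by (cases "f a") auto
  have fb: "f b = ereal (B - (norm (x - b))\<^sup>2 / 2)" using B by (cases "f b") auto
  define m where "m = (1 - 1/2) *\<^sub>R a + (1/2::real) *\<^sub>R b"
  have "f m \<le> ereal (1 - 1/2) * f a + ereal (1/2) * f b"
    using cv[unfolded convex_fun_def, rule_format, of "1/2" a b] unfolding m_def by simp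
  also have "\<dots> = ereal ((A - (norm (x - a))\<^sup>2 / 2) / 2 + (B - (norm (x - b))\<^sup>2 / 2) / 2)"
    using fa fb by simp
  finally have fm: "f m \<le> ereal ((A - (norm (x - a))\<^sup>2 / 2) / 2 + (B - (norm (x - b))\<^sup>2 / 2) / 2)" .
  have "ereal \<mu> \<le> f m + ereal ((norm (x - m))\<^sup>2 / 2)" using lb by blast
  also have "\<dots> \<le> ereal ((A - (norm (x - a))\<^sup>2 / 2) / 2 + (B - (norm (x - b))\<^sup>2 / 2) / 2) + ereal ((norm (x - m))\<^sup>2 / 2)"
    using fm by (rule add_right_mono)
  finally have r: "\<mu> \<le> (A - (norm (x - a))\<^sup>2 / 2) / 2 + (B - (norm (x - b))\<^sup>2 / 2) / 2 + (norm (x - m))\<^sup>2 / 2"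
    by simp
  have "x = (1/2) *\<^sub>R x + (1/2::real) *\<^sub>R x" by (simp flip: scaleR_add_left)
  then have "x - m = (1/2) *\<^sub>R ((x - a) + (x - b))" unfolding m_def by (simp add: algebra_simps)
  then have "(norm (x - m))\<^sup>2 = (norm (x - a))\<^sup>2 / 2 + (norm (x - b))\<^sup>2 / 2 - (norm ((x - b) - (x - a)))\<^sup>2 / 4"
    using par_id by metis
  moreover have "(x - b) - (x - a) = a - b" by simp
  ultimately have "(norm (x - m))\<^sup>2 = (norm (x - a))\<^sup>2 / 2 + (norm (x - b))\<^sup>2 / 2 - (norm (a - b))\<^sup>2 / 4"
    by simp
  then show ?thesis using r by (simp add: field_simps)
qed


lemma prox_exists:
  fixes f :: "'a::{real_inner,complete_space} \<Rightarrow> ereal"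
  assumes G: "f \<in> Gamma0"
  shows "\<exists>p. ismin f x p"
proof -
  have pr: "proper_fun f" and cv: "convex_fun f" and ls: "lsc_fun f"
    using G unfolding Gamma0_def by auto
  define F where "F w = f w + ereal ((norm (x - w))\<^sup>2 / 2)" for w
  obtain w0 where "f w0 \<noteq> \<infinity>" using pr unfolding proper_fun_def by auto
  then obtain a where a: "f w0 = ereal a" using fin_val[OF pr] by blast
  obtain d where d: "d > 0" "\<forall>w. dist w w0 < d \<longrightarrow> f w > ereal (a - 1)"
    using lsc_ball[OF ls a] by blast
  define K where "K = 2 / d"
  have K0: "K \<ge> 0" unfolding K_def using d by simp
  have lowf: "ereal (a - 1 - K * norm (w - w0)) \<le> f w" for w
    using lin_lower[OF pr cv a d(1) d(2)] unfolding K_def by blast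
  define L where "L = a - 1 - K * norm (x - w0) - K\<^sup>2 / 2"
  have lowF: "ereal L \<le> F w" for w
  proof -
    define s where "s = norm (x - w)"
    have "norm (w - w0) = norm ((x - w0) - (x - w))" by (simp add: algebra_simps)
    also have "\<dots> \<le> norm (x - w0) + s" unfolding s_def by (rule norm_triangle_ineq4)
    finally have t: "norm (w - w0) \<le> norm (x - w0) + s" .
    have "K * norm (w - w0) \<le> K * (norm (x - w0) + s)" using t K0 by (rule mult_left_mono)
    moreover have "0 \<le> (s - K)\<^sup>2" by simp
    ultimately have "L \<le> (a - 1 - K * norm (w - w0)) + s\<^sup>2 / 2"
      unfolding L_def by (simp add: power2_eq_square algebra_simps)
    then have "ereal L \<le> ereal (a - 1 - K * norm (w - w0)) + ereal (s\<^sup>2 / 2)" by simp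
    also have "\<dots> \<le> F w" unfolding F_def s_def using lowf[of w] by (rule add_right_mono)
    finally show ?thesis .
  qed
  define m where "m = (INF w. F w)"
  have mL: "ereal L \<le> m" unfolding m_def by (rule INF_greatest) (use lowF in auto)
  have "m \<le> F w0" unfolding m_def by (rule INF_lower) simp
  also have "F w0 = ereal (a + (norm (x - w0))\<^sup>2 / 2)" unfolding F_def using a by simp
  finally have "m \<le> ereal (a + (norm (x - w0))\<^sup>2 / 2)" .
  then obtain \<mu> where mu: "m = ereal \<mu>" using mL by (cases m) auto
  have lbmu: "ereal \<mu> \<le> F w" for w unfolding mu[symmetric] m_def by (rule INF_lower) simp
  have "\<exists>w. F w < ereal (\<mu> + 1 / real (Suc n))" for n
  proof -
    have "m < ereal (\<mu> + 1 / real (Suc n))" using mu by simp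
    then show ?thesis unfolding m_def by (simp add: INF_less_iff)
  qed
  then obtain ws where ws: "\<And>n. F (ws n) < ereal (\<mu> + 1 / real (Suc n))" by metis
  define A where "A n = real_of_ereal (F (ws n))" for n
  have FA: "F (ws n) = ereal (A n)" for n
  proof -
    have "ereal \<mu> \<le> F (ws n)" by (rule lbmu)
    then show ?thesis using ws[of n] unfolding A_def by (cases "F (ws n)") auto
  qed
  have An: "A n < \<mu> + 1 / real (Suc n)" "\<mu> \<le> A n" for n
    using ws[of n] lbmu[of "ws n"] FA[of n] by auto
  have bnd: "(norm (ws n - ws k))\<^sup>2 \<le> 4 / real (Suc n) + 4 / real (Suc k)" for n k
  proof -
    have "(norm (ws n - ws k))\<^sup>2 \<le> 4 * (A n - \<mu>) + 4 * (A k - \<mu>)"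
      by (rule mid_bound[OF pr cv _ FA[unfolded F_def] FA[unfolded F_def]]) (use lbmu in \<open>auto simp: F_def\<close>)
    also have "\<dots> \<le> 4 / real (Suc n) + 4 / real (Suc k)" using An[of n] An[of k] by simp
    finally show ?thesis .
  qed
  have "Cauchy ws"
  proof (rule CauchyI)
    fix e :: real assume e: "e > 0"
    obtain N where N: "8 / e\<^sup>2 < real N" using reals_Archimedean2 by blast
    have e2: "e\<^sup>2 > 0" using e by simp
    have "8 < e\<^sup>2 * real N" using N e2 by (simp add: field_simps)
    also have "\<dots> \<le> e\<^sup>2 * real (Suc N)" using e2 by simp
    finally have N8: "8 / real (Suc N) < e\<^sup>2" by (simp add: field_simps)
    have "\<forall>n\<ge>N. \<forall>k\<ge>N. norm (ws n - ws k) < e"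
    proof (intro allI impI)
      fix n k assume nk: "N \<le> n" "N \<le> k"
      have "4 / real (Suc n) \<le> 4 / real (Suc N)" using nk by (simp add: frac_le)
      moreover have "4 / real (Suc k) \<le> 4 / real (Suc N)" using nk by (simp add: frac_le)
      ultimately have "(norm (ws n - ws k))\<^sup>2 < e\<^sup>2" using bnd[of n k] N8 by simp
      then show "norm (ws n - ws k) < e" using e by (meson less_imp_le power_less_imp_less_base)
    qed
    then show "\<exists>M. \<forall>m\<ge>M. \<forall>n\<ge>M. norm (ws m - ws n) < e" by blast
  qed
  then obtain wst where lim: "ws \<longlonglongrightarrow> wst" using Cauchy_convergent convergent_def by blast
  define c where "c = (norm (x - wst))\<^sup>2 / 2"
  have cont: "(\<lambda>n. (norm (x - ws n))\<^sup>2 / 2) \<longlonglongrightarrow> c" unfolding c_def by (intro tendsto_intros lim) simp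
  have le_e: "f wst \<le> ereal (\<mu> - c + e)" if e: "e > 0" for e
  proof -
    have ev1: "eventually (\<lambda>n. (norm (x - ws n))\<^sup>2 / 2 > c - e / 2) sequentially"
      using order_tendstoD(1)[OF cont, of "c - e / 2"] e by simp
    obtain N where N: "2 / e < real N" using reals_Archimedean2 by blast
    have ev2: "eventually (\<lambda>n. 1 / real (Suc n) < e / 2) sequentially"
      unfolding eventually_sequentially
    proof (intro exI allI impI)
      fix n assume "N \<le> n"
      then have "2 / e < real (Suc n)" using N by simp
      then show "1 / real (Suc n) < e / 2" using e by (simp add: field_simps)
    qed
    have "eventually (\<lambda>n. ws n \<in> {w. f w \<le> ereal (\<mu> - c + e)}) sequentially"
      using ev1 ev2
    proof eventually_elim
      case (elim n)
      have "f (ws n) = ereal (A n - (norm (x - ws n))\<^sup>2 / 2)"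
        using FA[of n] unfolding F_def by (cases "f (ws n)") auto
      moreover have "A n - (norm (x - ws n))\<^sup>2 / 2 \<le> \<mu> - c + e" using elim An[of n] by simp
      ultimately show ?case by simp
    qed
    moreover have "closed {w. f w \<le> ereal (\<mu> - c + e)}" using ls unfolding lsc_fun_def by blast
    ultimately have "wst \<in> {w. f w \<le> ereal (\<mu> - c + e)}"
      using Lim_in_closed_set[OF _ _ _ lim] by (metis trivial_limit_sequentially)
    then show ?thesis by simp
  qed
  have "f wst \<noteq> \<infinity>" using le_e[of 1] by auto
  then obtain b where b: "f wst = ereal b" using fin_val[OF pr] by blast
  have "b \<le> \<mu> - c" by (rule field_le_epsilon) (use le_e b in auto)
  then have "F wst \<le> ereal \<mu>" unfolding F_def c_def using b by simp
  then have "ismin f x wst" unfolding ismin_def using lbmu unfolding F_def by (meson order_trans)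
  then show ?thesis by blast
qed


lemma prox_ok:
  fixes f :: "'a::{real_inner,complete_space} \<Rightarrow> ereal"
  assumes G: "f \<in> Gamma0"
  shows "ismin f x (prox f x)"
proof -
  have pr: "proper_fun f" and cv: "convex_fun f" using G unfolding Gamma0_def by auto
  have "\<exists>!p. ismin f x p" using prox_exists[OF G, of x] prox_unique[OF pr cv] by blast
  then show ?thesis unfolding prox_eq by (rule theI')
qed

lemma prox_char:
  fixes f :: "'a::{real_inner,complete_space} \<Rightarrow> ereal"
  assumes G: "f \<in> Gamma0"
  shows "\<exists>a. f (prox f x) = ereal a \<and> (\<forall>w. ereal (a + inner (x - prox f x) (w - prox f x)) \<le> f w)"
  using prox_sub[OF _ _ prox_ok[OF G]] G unfolding Gamma0_def by auto

definition ind :: "'a set \<Rightarrow> 'a \<Rightarrow> ereal" where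
  "ind C w = (if w \<in> C then 0 else \<infinity>)"

lemma ind_Gamma0:
  fixes C :: "'a::real_normed_vector set"
  assumes "C \<noteq> {}" "closed C" "convex C"
  shows "ind C \<in> Gamma0"
proof -
  have "proper_fun (ind C)" using assms(1) unfolding proper_fun_def ind_def by auto
  moreover have "convex_fun (ind C)"
    unfolding convex_fun_def
  proof (intro allI impI)
    fix x y :: 'a and u :: real assume u: "0 \<le> u \<and> u \<le> 1"
    show "ind C ((1 - u) *\<^sub>R x + u *\<^sub>R y) \<le> ereal (1 - u) * ind C x + ereal u * ind C y"
    proof (cases "x \<in> C \<and> y \<in> C")
      case True
      then have "(1 - u) *\<^sub>R x + u *\<^sub>R y \<in> C" using assms(3) u unfolding convex_def by auto
      then show ?thesis using True unfolding ind_def by simp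
    next
      case False
      show ?thesis
      proof (cases "u = 0")
        case True then show ?thesis by (simp add: ind_def)
      next
        case u0: False
        show ?thesis
        proof (cases "u = 1")
          case True then show ?thesis by (simp add: ind_def)
        next
          case False
          then have "0 < u" "u < 1" using u u0 by auto
          then show ?thesis using \<open>\<not> (x \<in> C \<and> y \<in> C)\<close> by (auto simp: ind_def)
        qed
      qed
    qed
  qed
  moreover have "lsc_fun (ind C)"
    unfolding lsc_fun_def
  proof
    fix t :: ereal
    have "{x. ind C x \<le> t} = (if t = \<infinity> then UNIV else if 0 \<le> t then C else {})"
      by (auto simp: ind_def)
    then show "closed {x. ind C x \<le> t}" using assms(2) by simp
  qed
  ultimately show ?thesis unfolding Gamma0_def by blast
qed

lemma proj_exists:
  fixes C :: "'a::{real_inner,complete_space} set"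
  assumes "C \<noteq> {}" "closed C" "convex C"
  shows "\<exists>r\<in>C. \<forall>w\<in>C. inner (x - r) (w - r) \<le> 0"
proof -
  obtain a where a: "ind C (prox (ind C) x) = ereal a"
    and sub: "\<forall>w. ereal (a + inner (x - prox (ind C) x) (w - prox (ind C) x)) \<le> ind C w"
    using prox_char[OF ind_Gamma0[OF assms]] by blast
  have r: "prox (ind C) x \<in> C" using a unfolding ind_def by (auto split: if_splits)
  then have a0: "a = 0" using a unfolding ind_def by simp
  have "\<forall>w\<in>C. inner (x - prox (ind C) x) (w - prox (ind C) x) \<le> 0"
  proof
    fix w assume w: "w \<in> C"
    have "ereal (a + inner (x - prox (ind C) x) (w - prox (ind C) x)) \<le> ind C w" using sub by blast
    then show "inner (x - prox (ind C) x) (w - prox (ind C) x) \<le> 0" using a0 w by (simp add: ind_def)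
  qed
  then show ?thesis using r by blast
qed

lemma vi_dist:
  fixes C :: "'a::real_inner set"
  assumes r: "r \<in> C" and vi: "\<forall>w\<in>C. inner (x - r) (w - r) \<le> 0"
  shows "infdist x C = norm (x - r)"
proof (rule antisym)
  show "infdist x C \<le> norm (x - r)" using infdist_le[OF r] by (simp add: dist_norm)
next
  have "norm (x - r) \<le> dist x w" if w: "w \<in> C" for w
  proof -
    have "(norm (x - w))\<^sup>2 = (norm ((x - r) - (w - r)))\<^sup>2" by simp
    also have "\<dots> = (norm (x - r))\<^sup>2 - 2 * inner (x - r) (w - r) + (norm (w - r))\<^sup>2"
      by (rule norm_diff_sq2)
    moreover have "inner (x - r) (w - r) \<le> 0" using vi w by blast
    moreover have "0 \<le> (norm (w - r))\<^sup>2" by simp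
    ultimately have "(norm (x - r))\<^sup>2 \<le> (norm (x - w))\<^sup>2" by linarith
    then have "norm (x - r) \<le> norm (x - w)" by (rule power2_le_imp_le) simp
    then show ?thesis by (simp only: dist_norm)
  qed
  moreover have "C \<noteq> {}" using r by blast
  ultimately show "norm (x - r) \<le> infdist x C" unfolding infdist_def
    by (simp only: if_False) (rule cINF_greatest)
qed

lemma quad_id: fixes r x y :: "'a::real_inner"
  shows "inner r y + (norm (x - y))\<^sup>2 / 2 = inner r (x - r) + (norm r)\<^sup>2 / 2 + (norm (x - r - y))\<^sup>2 / 2"
proof -
  have "(norm (x - r - y))\<^sup>2 = (norm ((x - y) - r))\<^sup>2" by (simp add: algebra_simps)
  also have "\<dots> = (norm (x - y))\<^sup>2 - 2 * inner (x - y) r + (norm r)\<^sup>2"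
    by (simp only: power2_norm_eq_inner) (simp add: inner_diff_left inner_diff_right inner_commute)
  finally have "(norm (x - r - y))\<^sup>2 = (norm (x - y))\<^sup>2 - 2 * inner (x - y) r + (norm r)\<^sup>2" .
  moreover have "inner (x - y) r = inner r x - inner r y" by (metis inner_commute inner_diff_right)
  moreover have "inner r (x - r) = inner r x - (norm r)\<^sup>2" by (simp add: inner_diff_right power2_norm_eq_inner)
  ultimately show ?thesis by (simp add: field_simps)
qed


lemma sig_ge: "y \<in> C \<Longrightarrow> ereal (inner y w) \<le> support_fun C w"
  unfolding support_fun_def by (rule SUP_upper)

lemma sig_le: "(\<And>y. y \<in> C \<Longrightarrow> inner y w \<le> B) \<Longrightarrow> support_fun C w \<le> ereal B"
  unfolding support_fun_def by (rule SUP_least) simp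

lemma sig_nonneg: "0 \<in> C \<Longrightarrow> 0 \<le> support_fun C w"
  using sig_ge[of 0 C w] by (simp add: zero_ereal_def)

lemma dir_back:
  fixes C :: "'a::{real_inner, complete_space} set" and f :: "'a \<Rightarrow> ereal"
  assumes "C \<noteq> {}" and "closed C" and "convex C"
    and fc: "\<forall>x. f x = support_fun C x + ereal c"
  shows "norm (prox f x) = infdist x C"
proof -
  obtain r where r: "r \<in> C" and vi: "\<forall>w\<in>C. inner (x - r) (w - r) \<le> 0"
    using proj_exists[OF assms(1-3)] by blast
  define p0 where "p0 = x - r"
  have "support_fun C p0 \<le> ereal (inner r p0)"
  proof (rule sig_le)
    fix w assume "w \<in> C"
    then have "inner (x - r) (w - r) \<le> 0" using vi by blast
    then show "inner w p0 \<le> inner r p0" unfolding p0_def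
      by (simp add: inner_diff_left inner_diff_right inner_commute)
  qed
  then have sp0: "support_fun C p0 = ereal (inner r p0)" using sig_ge[OF r] by (rule antisym)
  have fp0: "f p0 + ereal ((norm (x - p0))\<^sup>2 / 2) = ereal (inner r p0 + c + (norm r)\<^sup>2 / 2)"
    using fc sp0 unfolding p0_def by simp
  have low: "ereal (inner r y + c + (norm (x - y))\<^sup>2 / 2) \<le> f y + ereal ((norm (x - y))\<^sup>2 / 2)" for y
  proof -
    have "ereal (inner r y) + ereal c \<le> support_fun C y + ereal c" using sig_ge[OF r] by (rule add_right_mono)
    then have "ereal (inner r y + c) \<le> f y" using fc by simp
    then have "ereal (inner r y + c) + ereal ((norm (x - y))\<^sup>2 / 2) \<le> f y + ereal ((norm (x - y))\<^sup>2 / 2)"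
      by (rule add_right_mono)
    then show ?thesis by simp
  qed
  have "prox f x = p0" unfolding prox_eq
  proof (rule the_equality)
    show "ismin f x p0" unfolding ismin_def
    proof
      fix y
      have "inner r p0 + (norm r)\<^sup>2 / 2 \<le> inner r y + (norm (x - y))\<^sup>2 / 2"
        using quad_id[of r y x] unfolding p0_def by simp
      then have "ereal (inner r p0 + c + (norm r)\<^sup>2 / 2) \<le> ereal (inner r y + c + (norm (x - y))\<^sup>2 / 2)" by simp
      also have "\<dots> \<le> f y + ereal ((norm (x - y))\<^sup>2 / 2)" by (rule low)
      finally show "f p0 + ereal ((norm (x - p0))\<^sup>2 / 2) \<le> f y + ereal ((norm (x - y))\<^sup>2 / 2)"
        using fp0 by simp
    qed
  next
    fix p assume "ismin f x p"
    then have "f p + ereal ((norm (x - p))\<^sup>2 / 2) \<le> f p0 + ereal ((norm (x - p0))\<^sup>2 / 2)"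
      unfolding ismin_def by blast
    then have "ereal (inner r p + c + (norm (x - p))\<^sup>2 / 2) \<le> f p0 + ereal ((norm (x - p0))\<^sup>2 / 2)"
      using low[of p] by (rule order_trans[rotated])
    then have "ereal (inner r p + c + (norm (x - p))\<^sup>2 / 2) \<le> ereal (inner r p0 + c + (norm r)\<^sup>2 / 2)"
      by (simp only: fp0)
    then have "inner r p + (norm (x - p))\<^sup>2 / 2 \<le> inner r p0 + (norm r)\<^sup>2 / 2" by simp
    then have "(norm (x - r - p))\<^sup>2 \<le> 0" using quad_id[of r p x] unfolding p0_def by simp
    then have "x - r - p = 0" by simp
    then show "p = p0" unfolding p0_def by (simp add: algebra_simps)
  qed
  then show ?thesis using vi_dist[OF r vi] unfolding p0_def by simp
qed


lemma dir_fwd: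
  fixes C :: "'a::{real_inner, complete_space} set" and f :: "'a \<Rightarrow> ereal"
  assumes CC: "C \<noteq> {}" "closed C" "convex C" and C0: "0 \<in> C"
    and G: "f \<in> Gamma0" and H: "\<forall>x. norm (prox f x) = infdist x C"
  shows "\<exists>c::real. \<forall>x. f x = support_fun C x + ereal c"
proof -
  have pr: "proper_fun f" and ls: "lsc_fun f" using G unfolding Gamma0_def by auto
  note chr = prox_char[OF G]
  have pC: "prox f x = 0" if x: "x \<in> C" for x
  proof -
    have "infdist x C \<le> 0" using infdist_le[OF x, of x] by simp
    then have "infdist x C = 0" using infdist_nonneg[of x C] by linarith
    then have "norm (prox f x) = 0" using H by metis
    then show ?thesis by simp
  qed
  obtain c0 where c0: "f 0 = ereal c0" using chr[of 0] pC[OF C0] by auto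
  have subC: "ereal (c0 + inner x w) \<le> f w" if x: "x \<in> C" for x w
  proof -
    obtain a where a: "f (prox f x) = ereal a"
      and sub: "\<forall>w. ereal (a + inner (x - prox f x) (w - prox f x)) \<le> f w"
      using chr[of x] by blast
    have "a = c0" using a c0 pC[OF x] by simp
    then show ?thesis using sub pC[OF x] by simp
  qed
  have lower: "support_fun C w + ereal c0 \<le> f w" for w
  proof (cases "f w = \<infinity>")
    case True then show ?thesis by simp
  next
    case False
    then obtain b where b: "f w = ereal b" using fin_val[OF pr] by blast
    have "support_fun C w \<le> ereal (b - c0)"
    proof (rule sig_le)
      fix y assume "y \<in> C"
      then have "ereal (c0 + inner y w) \<le> ereal b" using subC b by metis
      then show "inner y w \<le> b - c0" by simp
    qed
    moreover have "0 \<le> support_fun C w" using sig_nonneg[OF C0] .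
    ultimately show ?thesis using b by (cases "support_fun C w") auto
  qed
  have pr_eq: "prox f x = x - r" if r: "r \<in> C" and vi: "\<forall>w\<in>C. inner (x - r) (w - r) \<le> 0" for x r
  proof -
    define p where "p = prox f x"
    obtain a where a: "f p = ereal a"
      and sub: "\<forall>w. ereal (a + inner (x - p) (w - p)) \<le> f w"
      using chr[of x] unfolding p_def by blast
    have "ereal (a + inner (x - p) (0 - p)) \<le> ereal c0" using sub c0 by metis
    then have i1: "a - inner (x - p) p \<le> c0" by simp
    have "ereal (inner r p) + ereal c0 \<le> support_fun C p + ereal c0"
      using sig_ge[OF r] by (rule add_right_mono)
    also have "\<dots> \<le> ereal a" using lower[of p] a by simp
    finally have i2: "inner r p + c0 \<le> a" by simp
    have np: "norm p = norm (x - r)" using H vi_dist[OF r vi] unfolding p_def by simp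
    have "inner p (x - r) = inner p x - inner r p" by (simp add: inner_diff_right inner_commute)
    moreover have "inner (x - p) p = inner p x - (norm p)\<^sup>2"
      by (metis inner_commute inner_diff_left power2_norm_eq_inner)
    ultimately have ge: "inner p (x - r) \<ge> (norm p)\<^sup>2" using i1 i2 by linarith
    have "(norm (p - (x - r)))\<^sup>2 = (norm p)\<^sup>2 - 2 * inner p (x - r) + (norm (x - r))\<^sup>2"
      by (rule norm_diff_sq2)
    then have "(norm (p - (x - r)))\<^sup>2 \<le> 0" using ge np by simp
    then have "p - (x - r) = 0" by simp
    then show ?thesis unfolding p_def by simp
  qed
  have upper: "f y \<le> support_fun C y + ereal c0" for y
  proof (cases "support_fun C y = \<infinity>")
    case True then show ?thesis by simp
  next
    case False
    moreover have "0 \<le> support_fun C y" using sig_nonneg[OF C0] .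
    ultimately obtain s where s: "support_fun C y = ereal s" "s \<ge> 0" by (cases "support_fun C y") auto
    have cl: "closed {w. f w \<le> ereal (s + c0)}" using ls unfolding lsc_fun_def by blast
    have "\<exists>w\<in>{w. f w \<le> ereal (s + c0)}. dist w y < e" if e: "e > 0" for e
    proof -
      define l where "l = e\<^sup>2 / (s + 1)"
      have l0: "l > 0" unfolding l_def using e s by simp
      define z where "z = (1 / l) *\<^sub>R y"
      have yz: "y = l *\<^sub>R z" unfolding z_def using l0 by simp
      obtain q where q: "q \<in> C" and viq: "\<forall>w\<in>C. inner (z - q) (w - q) \<le> 0"
        using proj_exists[OF CC] by blast
      define yl where "yl = y - l *\<^sub>R q"
      define x' where "x' = yl + q"
      have ylz: "yl = l *\<^sub>R (z - q)" unfolding yl_def yz by (simp add: algebra_simps)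
      have vix: "\<forall>w\<in>C. inner (x' - q) (w - q) \<le> 0"
      proof
        fix w assume "w \<in> C"
        then have "inner (z - q) (w - q) \<le> 0" using viq by blast
        then have "l * inner (z - q) (w - q) \<le> 0" using l0 by (simp add: mult_nonneg_nonpos)
        then show "inner (x' - q) (w - q) \<le> 0" unfolding x'_def ylz by simp
      qed
      have px: "prox f x' = yl" using pr_eq[OF q vix] unfolding x'_def by simp
      obtain a where a: "f yl = ereal a"
        and sub: "\<forall>w. ereal (a + inner (x' - yl) (w - yl)) \<le> f w"
        using chr[of x'] unfolding px by blast
      have "ereal (a + inner (x' - yl) (0 - yl)) \<le> ereal c0" using sub c0 by metis
      then have i1: "a - inner q yl \<le> c0" unfolding x'_def by simp
      have "ereal (inner q y) \<le> ereal s" using sig_ge[OF q, of y] s by simp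
      then have qy: "inner q y \<le> s" by simp
      have "inner q yl = inner q y - l * (norm q)\<^sup>2"
        unfolding yl_def by (simp add: inner_diff_right power2_norm_eq_inner)
      moreover have "0 \<le> l * (norm q)\<^sup>2" using l0 by simp
      ultimately have "a \<le> s + c0" using i1 qy by linarith
      then have mem: "yl \<in> {w. f w \<le> ereal (s + c0)}" using a by simp
      have "inner (z - q) (0 - q) \<le> 0" using viq C0 by blast
      then have "(norm q)\<^sup>2 \<le> inner z q"
        by (simp add: inner_diff_left inner_diff_right power2_norm_eq_inner inner_commute)
      then have "l * (norm q)\<^sup>2 \<le> l * inner z q" using l0 by simp
      also have "l * inner z q = inner y q" unfolding yz by simp
      also have "\<dots> \<le> s" using qy by (simp add: inner_commute)
      finally have lq: "l * (norm q)\<^sup>2 \<le> s" .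
      have d: "dist yl y = l * norm q" unfolding yl_def dist_norm using l0 by simp
      have "(l * norm q)\<^sup>2 = l * (l * (norm q)\<^sup>2)" by (simp add: power2_eq_square)
      also have "\<dots> \<le> l * s" using lq l0 by simp
      also have "\<dots> < e\<^sup>2" unfolding l_def using e s by (simp add: field_simps)
      finally have "(l * norm q)\<^sup>2 < e\<^sup>2" .
      then have "l * norm q < e" using e by (meson less_imp_le power_less_imp_less_base)
      then show ?thesis using mem d by auto
    qed
    then have "y \<in> {w. f w \<le> ereal (s + c0)}" using closed_approachable[OF cl] by blast
    then show ?thesis using s by simp
  qed
  have "\<forall>x. f x = support_fun C x + ereal c0" using lower upper by (metis antisym)
  then show ?thesis by blast
qed

theorem corollary1:
  fixes C :: "'a::{real_inner, complete_space} set"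
    and f :: "'a \<Rightarrow> ereal"
  assumes "C \<noteq> {}" and "closed C" and "convex C" and "0 \<in> C"
    and "f \<in> Gamma0"
  shows "(\<forall>x. norm (prox f x) = infdist x C) \<longleftrightarrow>
         (\<exists>c::real. \<forall>x. f x = support_fun C x + ereal c)"
proof
  assume "\<forall>x. norm (prox f x) = infdist x C"
  then show "\<exists>c::real. \<forall>x. f x = support_fun C x + ereal c"
    using dir_fwd[OF assms(1-3) assms(4) assms(5)] by blast
next
  assume "\<exists>c::real. \<forall>x. f x = support_fun C x + ereal c"
  then obtain c where "\<forall>x. f x = support_fun C x + ereal c" by blast
  then show "\<forall>x. norm (prox f x) = infdist x C"
    using dir_back[OF assms(1-3)] by blast
qed

end
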